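(* Let $f,g\in\mathbb{C}[X]$ with $\deg f=n\ge 1$ and $g\mid f$, $g\neq 0$. Then $\Phi(g):=f g'/g=\sum_{i=0}^{n-1}a_iX^i\in\mathbb{C}[X]$ and for every $0\le i\le n-1$, $$|a_i|\le B_i:=\binom{n-1}{i}\,n\,M(f).$$
   Context: For $h\in\mathbb{C}[X]$ with leading coefficient $\ell_h$, the Mahler measure is $M(h)=|\ell_h|\prod_{|\alpha|>1}|\alpha|^{m_\alpha}$, the product over the complex roots $\alpha$ of $h$ with $|\alpha|>1$, $m_\alpha$ the multiplicity of $\alpha$. *)

theory Defs
  imports "Berlekamp_Zassenhaus.Mahler_Measure"
begin

end

theory Submission
  imports Defs "Berlekamp_Zassenhaus.Factor_Bound"
begin

lemma lc_le_mahler: "cmod (lead_coeff h) \<le> mahler_measure_poly h"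
proof -
  have "cmod (lead_coeff h) * 1 \<le> cmod (lead_coeff h) * mahler_measure_monic h"
    by (rule mult_left_mono[OF mahler_measure_monic_ge_1], simp)
  thus ?thesis unfolding mahler_measure_poly_via_monic by simp
qed

lemma coeff_le_mahler: "cmod (coeff h i) \<le> real (degree h choose i) * mahler_measure_poly h"
proof (cases "degree h = 0")
  case True
  show ?thesis
  proof (cases i)
    case 0
    then show ?thesis using True lc_le_mahler[of h] by simp
  next
    case (Suc j)
    then have "coeff h i = 0" using True by (simp add: coeff_eq_0)
    then show ?thesis using True Suc mahler_measure_poly_via_monic[of h] mahler_measure_monic_ge_0[of h] by simp
  qed
next
  case False
  have M0: "0 \<le> mahler_measure_poly h" using mahler_measure_poly_via_monic[of h] mahler_measure_monic_ge_0[of h] by simp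
  have "cmod (coeff h i) \<le> (degree h - 1 choose i) * mahler_measure_poly h 
      + min i 1 * (degree h - 1 choose (i - 1)) * cmod (lead_coeff h)"
    by (rule mignotte_helper_coeff)
  also have "\<dots> \<le> (degree h - 1 choose i) * mahler_measure_poly h 
      + min i 1 * (degree h - 1 choose (i - 1)) * mahler_measure_poly h"
    by (rule add_left_mono, rule mult_left_mono[OF lc_le_mahler], simp)
  also have "\<dots> = real ((degree h - 1 choose i) + min i 1 * (degree h - 1 choose (i - 1))) * mahler_measure_poly h"
    by (simp add: algebra_simps)
  also have "(degree h - 1 choose i) + min i 1 * (degree h - 1 choose (i - 1)) = degree h choose i"
  proof (cases i)
    case (Suc j)
    have "degree h = Suc (degree h - 1)" using False by simp
    then have "degree h choose Suc j = (degree h - 1 choose j) + (degree h - 1 choose Suc j)"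
      by (metis binomial_Suc_Suc add.commute)
    then show ?thesis using Suc by simp
  qed simp
  finally show ?thesis .
qed

lemma pderiv_prod_lin:
  "\<exists>qs. pderiv (\<Prod>a\<leftarrow>rs. [:- a, 1:]) = sum_list qs \<and> length qs = length rs
     \<and> (\<forall>q\<in>set qs. \<exists>a. q * [:- a, 1:] = (\<Prod>a\<leftarrow>rs. [:- a, (1::complex):]))"
proof (induction rs)
  case Nil
  then show ?case by (intro exI[of _ "[]"]) simp
next
  case (Cons b rs)
  then obtain qs where qs: "pderiv (\<Prod>a\<leftarrow>rs. [:- a, 1:]) = sum_list qs" "length qs = length rs"
    "\<forall>q\<in>set qs. \<exists>a. q * [:- a, 1:] = (\<Prod>a\<leftarrow>rs. [:- a, (1::complex):])" by blast
  let ?P = "\<Prod>a\<leftarrow>rs. [:- a, (1::complex):]"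
  have "(\<Prod>a\<leftarrow>b # rs. [:- a, 1:]) = [:-b,1:] * ?P" by simp
  hence "pderiv (\<Prod>a\<leftarrow>b # rs. [:- a, 1:]) = [:-b,1:] * pderiv ?P + ?P * pderiv [:-b,1:]"
    by (simp only: pderiv_mult)
  also have "pderiv [:-b,(1::complex):] = 1" by (simp add: pderiv_pCons)
  finally have "pderiv (\<Prod>a\<leftarrow>b # rs. [:- a, 1:]) = ?P + [:-b,1:] * sum_list qs"
    using qs(1) by simp
  also have "[:-b,1:] * sum_list qs = sum_list (map ((*) [:-b,1:]) qs)"
    by (induction qs) (simp_all only: list.map sum_list.Cons sum_list.Nil distrib_left mult_zero_right)
  finally have 1: "pderiv (\<Prod>a\<leftarrow>b # rs. [:- a, 1:]) = sum_list (?P # map ((*) [:-b,1:]) qs)" by simp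
  have 2: "\<forall>q\<in>set (?P # map ((*) [:-b,1:]) qs). \<exists>a. q * [:- a, 1:] = (\<Prod>a\<leftarrow>b#rs. [:- a, (1::complex):])"
  proof
    fix q assume "q \<in> set (?P # map ((*) [:-b,1:]) qs)"
    then consider "q = ?P" | q' where "q' \<in> set qs" "q = [:-b,1:] * q'" by auto
    then show "\<exists>a. q * [:- a, 1:] = (\<Prod>a\<leftarrow>b#rs. [:- a, (1::complex):])"
    proof cases
      case 1 then show ?thesis by (intro exI[of _ b]) (simp add: mult.commute)
    next
      case 2
      then obtain a where "q' * [:- a, 1:] = ?P" using qs(3) by blast
      then have "q * [:- a, 1:] = [:-b,1:] * ?P" using 2 by (metis mult.assoc)
      then show ?thesis by (intro exI[of _ a]) simp
    qed
  qed
  show ?case using 1 2 qs(2) by (intro exI[of _ "?P # map ((*) [:-b,1:]) qs"]) simp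
qed

theorem lemma4p1:
  fixes f g :: "complex poly" and n :: nat
  assumes "degree f = n" and "n \<ge> 1" and "g dvd f" and "g \<noteq> 0"
  shows "g dvd f * pderiv g
    \<and> degree (f * pderiv g div g) \<le> n - 1
    \<and> (\<forall>i \<le> n - 1. cmod (coeff (f * pderiv g div g) i)
          \<le> real ((n - 1) choose i) * real n * mahler_measure_poly f)"
proof -
  obtain h where fh: "f = g * h" using assms(3) by blast
  have f0: "f \<noteq> 0" using assms(1,2) by auto
  let ?rs = "complex_roots_complex g"
  let ?cg = "lead_coeff g"
  have gr: "g = smult ?cg (\<Prod>a\<leftarrow>?rs. [:- a, 1:])" using complex_roots(1)[of g] by simp
  obtain qs where qs: "pderiv (\<Prod>a\<leftarrow>?rs. [:- a, 1:]) = sum_list qs" "length qs = length ?rs"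
    "\<forall>q\<in>set qs. \<exists>a. q * [:- a, 1:] = (\<Prod>a\<leftarrow>?rs. [:- a, (1::complex):])"
    using pderiv_prod_lin by blast
  define ts where "ts = map (\<lambda>q. smult ?cg (h * q)) qs"
  have eq: "f * pderiv g div g = h * pderiv g"
    using assms(4) fh by (simp add: mult.assoc)
  have pg: "pderiv g = smult ?cg (sum_list qs)"
  proof -
    have "pderiv g = pderiv (smult ?cg (\<Prod>a\<leftarrow>?rs. [:- a, 1:]))" using gr by (rule arg_cong)
    also have "\<dots> = smult ?cg (pderiv (\<Prod>a\<leftarrow>?rs. [:- a, 1:]))" by (rule pderiv_smult)
    finally show ?thesis using qs(1) by simp
  qed
  have "h * smult ?cg (sum_list qs) = sum_list ts"
    unfolding ts_def by (induction qs) (simp_all only: list.map sum_list.Cons sum_list.Nil distrib_left mult_zero_right smult_add_right smult_0_right mult_smult_right)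
  hence eq2: "f * pderiv g div g = sum_list ts" using eq pg by simp
  have tsf: "\<exists>a. t * [:- a, 1:] = f" if "t \<in> set ts" for t
  proof -
    from that obtain q where q: "q \<in> set qs" "t = smult ?cg (h * q)" unfolding ts_def by auto
    then obtain a where a: "q * [:- a, 1:] = (\<Prod>a\<leftarrow>?rs. [:- a, (1::complex):])" using qs(3) by blast
    have "t * [:- a, 1:] = smult ?cg (h * (q * [:- a, 1:]))" using q by (metis mult.assoc mult_smult_left)
    also have "\<dots> = h * g" using a gr by (metis mult_smult_right)
    finally show ?thesis using fh by (auto simp: mult.commute)
  qed
  have tdeg: "degree t = n - 1" if tin: "t \<in> set ts" for t
  proof -
    obtain a where a: "t * [:- a, 1:] = f" using tsf[OF tin] by blast
    hence "t \<noteq> 0" using f0 by auto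
    hence "degree (t * [:- a, 1:]) = degree t + degree [:- a, (1::complex):]" by (intro degree_mult_eq) auto
    hence "degree f = degree t + 1" using a by simp
    thus ?thesis using assms(1) by simp
  qed
  have tbound: "cmod (coeff t i) \<le> real ((n - 1) choose i) * mahler_measure_poly f" if tin: "t \<in> set ts" for t i
  proof -
    obtain a where a: "t * [:- a, 1:] = f" using tsf[OF tin] by blast
    have "mahler_measure_poly f = mahler_measure_poly t * max 1 (cmod a)"
      using a[symmetric] measure_eq_prod[of t "[:- a, 1:]"] mahler_measure_factor[of a] by simp
    moreover have "0 \<le> mahler_measure_poly t" using mahler_measure_poly_via_monic[of t] mahler_measure_monic_ge_0[of t] by simp
    ultimately have "mahler_measure_poly t \<le> mahler_measure_poly f"
      by (metis max.cobounded1 mult_left_mono mult.right_neutral)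
    hence "real ((n - 1) choose i) * mahler_measure_poly t \<le> real ((n - 1) choose i) * mahler_measure_poly f"
      by (simp add: mult_left_mono)
    thus ?thesis using coeff_le_mahler[of t i] tdeg[OF tin] by simp
  qed
  have lts: "length ts \<le> n"
  proof -
    have "length ts = degree g" unfolding ts_def using qs(2) by simp
    also have "\<dots> \<le> n" using assms(1) fh f0 by (simp add: degree_mult_eq)
    finally show ?thesis .
  qed
  have degsum: "\<forall>t\<in>set xs. degree t = n - 1 \<Longrightarrow> degree (sum_list xs) \<le> n - 1" for xs :: "complex poly list"
    by (induction xs) (auto intro: order.trans[OF degree_add_le])
  have cbound: "\<forall>t\<in>set xs. (\<forall>i. cmod (coeff t i) \<le> B i) \<Longrightarrow> cmod (coeff (sum_list xs) i) \<le> real (length xs) * B i"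
    for xs :: "complex poly list" and B i
  proof (induction xs)
    case (Cons a xs)
    have "cmod (coeff (sum_list (a # xs)) i) \<le> cmod (coeff a i) + cmod (coeff (sum_list xs) i)"
      by (simp add: norm_triangle_ineq)
    also have "\<dots> \<le> B i + real (length xs) * B i" using Cons by (intro add_mono) auto
    finally show ?case by (simp add: algebra_simps)
  qed simp
  show ?thesis
  proof (intro conjI allI impI)
    show "g dvd f * pderiv g" using assms(3) by simp
    show "degree (f * pderiv g div g) \<le> n - 1" unfolding eq2 using degsum tdeg by blast
    fix i
    have "cmod (coeff (sum_list ts) i) \<le> real (length ts) * (real ((n - 1) choose i) * mahler_measure_poly f)"
      using cbound[of ts "\<lambda>i. real ((n - 1) choose i) * mahler_measure_poly f"] tbound by blast
    also have "\<dots> \<le> real n * (real ((n - 1) choose i) * mahler_measure_poly f)"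
      using lts mahler_measure_poly_via_monic[of f] mahler_measure_monic_ge_0[of f]
      by (intro mult_right_mono) auto
    finally show "cmod (coeff (f * pderiv g div g) i) \<le> real ((n - 1) choose i) * real n * mahler_measure_poly f"
      unfolding eq2 by (simp add: algebra_simps)
  qed
qed

end
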